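(* Let $r\ge2$ and $R=\{1,2,r+1,r+2\}$. Then for all $n,k\ge1$, the number $L(n,k)^{-1}_R$ is either $0$ or has sign $(-1)^{n-k}$, i.e. $(-1)^{n-k}L(n,k)^{-1}_R\ge0$. Equivalently, the compositional inverse of $x+x^2+x^{r+1}+x^{r+2}$ has coefficient of $x^n$ of sign $(-1)^{n-1}$ or $0$ for every $n\ge1$.
   Context: For $R\subseteq\mathbb N$, $L(n,k)_R$ is the number of partitions of $[n]$ into $k$ lists (linearly ordered nonempty blocks) each of size in $R$, and $L(n,k)^{-1}_R$ is the $(n,k)$ entry of the inverse of the infinite lower-triangular matrix $[L(n,k)_R]_{n,k\ge1}$ (rows indexed by $n$). *)

theory Defs
  imports Complex_Main
begin

text \<open>Partitions of [n] = {1..n} into k lists (linearly ordered nonempty blocks),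
  each list having length in R.\<close>

definition list_partitions :: "nat \<Rightarrow> nat \<Rightarrow> nat set \<Rightarrow> nat list set set" where
  "list_partitions n k R =
     {P. finite P \<and> card P = k \<and>
         (\<forall>xs\<in>P. xs \<noteq> [] \<and> distinct xs \<and> length xs \<in> R) \<and>
         (\<forall>xs\<in>P. \<forall>ys\<in>P. xs \<noteq> ys \<longrightarrow> set xs \<inter> set ys = {}) \<and>
         (\<Union>xs\<in>P. set xs) = {1..n}}"

definition Lah_R :: "nat set \<Rightarrow> nat \<Rightarrow> nat \<Rightarrow> nat" where
  "Lah_R R n k = card (list_partitions n k R)"

text \<open>Entries of the inverse of an infinite lower-triangular matrix M
  (rows/columns indexed from 1), computed by forward substitution from
  \<open>\<Sum>j=k..n. M n j * X j k = (if n = k then 1 else 0)\<close>.\<close>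

function lt_inv :: "(nat \<Rightarrow> nat \<Rightarrow> real) \<Rightarrow> nat \<Rightarrow> nat \<Rightarrow> real" where
  "lt_inv M n k =
     (if n < k then 0
      else if n = k then 1 / M n n
      else - (\<Sum>j\<in>{k..<n}. M n j * lt_inv M j k) / M n n)"
  by auto
termination
  by (relation "measure (\<lambda>(M, n, k). n)") auto

definition Lah_R_inv :: "nat set \<Rightarrow> nat \<Rightarrow> nat \<Rightarrow> real" where
  "Lah_R_inv R n k = lt_inv (\<lambda>i j. real (Lah_R R i j)) n k"

end

theory Submission
  imports Defs "HOL-Computational_Algebra.Formal_Power_Series"
begin
unbundle fps_syntax


definition LP :: "nat set \<Rightarrow> nat \<Rightarrow> nat set \<Rightarrow> nat list set set" where
  "LP S k R =
     {P. finite P \<and> card P = k \<and>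
         (\<forall>xs\<in>P. xs \<noteq> [] \<and> distinct xs \<and> length xs \<in> R) \<and>
         (\<forall>xs\<in>P. \<forall>ys\<in>P. xs \<noteq> ys \<longrightarrow> set xs \<inter> set ys = {}) \<and>
         (\<Union>xs\<in>P. set xs) = S}"

lemma LP_finite: assumes "finite S" shows "finite (LP S k R)"
proof -
  have "LP S k R \<subseteq> Pow {xs. set xs \<subseteq> S \<and> distinct xs}"
    unfolding LP_def by auto
  moreover have "finite (Pow {xs. set xs \<subseteq> S \<and> distinct xs})"
    using finite_subset_distinct[OF assms] by simp
  ultimately show ?thesis by (rule finite_subset)
qed

lemma LP_0: "LP S 0 R = (if S = {} then {{}} else {})"
  unfolding LP_def by (auto simp: card_eq_0_iff)

definition Dm :: "nat set \<Rightarrow> nat \<Rightarrow> nat list set" where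
  "Dm S m = {xs. length xs = m \<and> distinct xs \<and> set xs \<subseteq> S}"

lemma LP_mem_insert:
  assumes Q: "Q \<in> LP (S - set xs) k R" and xs: "xs \<noteq> []" "distinct xs" "length xs \<in> R"
    and sub: "set xs \<subseteq> S"
  shows "insert xs Q \<in> LP S (Suc k) R" "xs \<notin> Q"
proof -
  have fQ: "finite Q" and cQ: "card Q = k" and el: "\<forall>ys\<in>Q. ys \<noteq> [] \<and> distinct ys \<and> length ys \<in> R"
    and dj: "\<forall>ys\<in>Q. \<forall>zs\<in>Q. ys \<noteq> zs \<longrightarrow> set ys \<inter> set zs = {}"
    and un: "(\<Union>ys\<in>Q. set ys) = S - set xs" using Q unfolding LP_def by auto
  show nQ: "xs \<notin> Q"
  proof
    assume "xs \<in> Q"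
    then have "set xs \<subseteq> S - set xs" using un by blast
    then show False using xs by (cases xs) auto
  qed
  have dj2: "\<forall>ys\<in>Q. set xs \<inter> set ys = {}" using un by blast
  show "insert xs Q \<in> LP S (Suc k) R"
    unfolding LP_def
  proof (intro CollectI conjI)
    show "finite (insert xs Q)" using fQ by simp
    show "card (insert xs Q) = Suc k" using fQ nQ cQ by simp
    show "\<forall>ys\<in>insert xs Q. ys \<noteq> [] \<and> distinct ys \<and> length ys \<in> R" using el xs by simp
    show "\<forall>ys\<in>insert xs Q. \<forall>zs\<in>insert xs Q. ys \<noteq> zs \<longrightarrow> set ys \<inter> set zs = {}"
      using dj dj2 by blast
    show "(\<Union>ys\<in>insert xs Q. set ys) = S" using un sub by auto
  qed
qed

lemma LP_mem_remove:
  assumes P: "P \<in> LP S (Suc k) R" and xs: "xs \<in> P"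
  shows "P - {xs} \<in> LP (S - set xs) k R"
proof -
  have fP: "finite P" and cP: "card P = Suc k" and el: "\<forall>ys\<in>P. ys \<noteq> [] \<and> distinct ys \<and> length ys \<in> R"
    and dj: "\<forall>ys\<in>P. \<forall>zs\<in>P. ys \<noteq> zs \<longrightarrow> set ys \<inter> set zs = {}"
    and un: "(\<Union>ys\<in>P. set ys) = S" using P unfolding LP_def by auto
  show ?thesis unfolding LP_def
  proof (intro CollectI conjI)
    show "finite (P - {xs})" using fP by simp
    show "card (P - {xs}) = k" using fP cP xs by simp
    show "\<forall>ys\<in>P - {xs}. ys \<noteq> [] \<and> distinct ys \<and> length ys \<in> R" using el by simp
    show "\<forall>ys\<in>P - {xs}. \<forall>zs\<in>P - {xs}. ys \<noteq> zs \<longrightarrow> set ys \<inter> set zs = {}"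
      using dj by blast
    show "(\<Union>ys\<in>P - {xs}. set ys) = S - set xs"
    proof
      show "(\<Union>ys\<in>P - {xs}. set ys) \<subseteq> S - set xs"
      proof
        fix a assume "a \<in> (\<Union>ys\<in>P - {xs}. set ys)"
        then obtain ys where "ys \<in> P" "ys \<noteq> xs" "a \<in> set ys" by blast
        then show "a \<in> S - set xs" using dj xs un by blast
      qed
      show "S - set xs \<subseteq> (\<Union>ys\<in>P - {xs}. set ys)" using un by blast
    qed
  qed
qed

lemma LP_Suc_bij:
  assumes fin: "finite S" and R0: "0 \<notin> R"
  shows "card (SIGMA P:LP S (Suc k) R. P) =
         card (SIGMA xs:(\<Union>m\<in>R. Dm S m). LP (S - set xs) k R)"
proof -
  let ?A = "(SIGMA xs:(\<Union>m\<in>R. Dm S m). LP (S - set xs) k R)"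
  let ?g = "\<lambda>(xs, Q). (insert xs Q, xs)"
  have D: "xs \<noteq> [] \<and> distinct xs \<and> length xs \<in> R \<and> set xs \<subseteq> S" if "xs \<in> (\<Union>m\<in>R. Dm S m)" for xs
    using that R0 unfolding Dm_def by auto
  have inj: "inj_on ?g ?A"
  proof (rule inj_onI)
    fix p q assume p: "p \<in> ?A" and q: "q \<in> ?A" and e: "?g p = ?g q"
    obtain xs Q where pe: "p = (xs, Q)" by (cases p)
    obtain xs' Q' where qe: "q = (xs', Q')" by (cases q)
    have a: "xs \<in> (\<Union>m\<in>R. Dm S m)" "Q \<in> LP (S - set xs) k R"
       "xs' \<in> (\<Union>m\<in>R. Dm S m)" "Q' \<in> LP (S - set xs') k R" using p q pe qe by auto
    have e1: "xs = xs'" and e2: "insert xs Q = insert xs' Q'" using e pe qe by auto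
    have "xs \<notin> Q" using LP_mem_insert(2)[OF a(2)] D[OF a(1)] by blast
    moreover have "xs \<notin> Q'" using LP_mem_insert(2)[OF a(4)] D[OF a(3)] e1 by blast
    ultimately have "Q = Q'" using e1 e2 by (metis insert_ident)
    then show "p = q" using pe qe e1 by simp
  qed
  have img: "?g ` ?A = (SIGMA P:LP S (Suc k) R. P)"
  proof (rule set_eqI, rule iffI)
    fix z assume "z \<in> ?g ` ?A"
    then obtain xs Q where z: "z = (insert xs Q, xs)" and xsD: "xs \<in> (\<Union>m\<in>R. Dm S m)"
      and Q: "Q \<in> LP (S - set xs) k R" by auto
    have "insert xs Q \<in> LP S (Suc k) R" using LP_mem_insert(1)[OF Q] D[OF xsD] by blast
    then show "z \<in> (SIGMA P:LP S (Suc k) R. P)" using z by auto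
  next
    fix z assume "z \<in> (SIGMA P:LP S (Suc k) R. P)"
    then obtain P xs where z: "z = (P, xs)" and P: "P \<in> LP S (Suc k) R" and xs: "xs \<in> P" by auto
    have xsD: "xs \<in> (\<Union>m\<in>R. Dm S m)" using P xs unfolding LP_def Dm_def by blast
    have Q: "P - {xs} \<in> LP (S - set xs) k R" by (rule LP_mem_remove[OF P xs])
    have "P = insert xs (P - {xs})" using xs by auto
    then have "z = ?g (xs, P - {xs})" using z by simp
    moreover have "(xs, P - {xs}) \<in> ?A" using xsD Q by blast
    ultimately show "z \<in> ?g ` ?A" by blast
  qed
  show ?thesis using card_image[OF inj] img by simp
qed

definition FR :: "nat set \<Rightarrow> real fps" where
  "FR R = Abs_fps (\<lambda>n. if n \<in> R then 1 else 0)"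

definition T :: "nat set \<Rightarrow> nat \<Rightarrow> nat \<Rightarrow> real" where
  "T R n k = fact n / fact k * ((FR R)^k $ n)"

lemma T_0: "T R n 0 = (if n = 0 then 1 else 0)"
  by (simp add: T_def)

lemma T_Suc:
  "real (Suc k) * T R n (Suc k) = (\<Sum>m\<in>R \<inter> {..n}. fact n / fact (n - m) * T R (n - m) k)"
proof -
  have h1: "fact k \<noteq> (0::real)" "1 + real k \<noteq> 0" by auto
  have cancel: "s \<noteq> 0 \<Longrightarrow> s * (a / (s * b) * c) = a / b * c" for s a b c :: real
    by (simp add: field_simps)
  have "real (Suc k) * T R n (Suc k) = fact n / fact k * ((FR R * (FR R)^k) $ n)"
    unfolding T_def fact_Suc power_Suc of_nat_mult by (rule cancel) simp
  also have "(FR R * (FR R)^k) $ n = (\<Sum>i=0..n. (if i \<in> R then ((FR R)^k $ (n - i)) else 0))"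
    unfolding fps_mult_nth by (rule sum.cong) (auto simp: FR_def)
  also have "\<dots> = (\<Sum>i\<in>{i\<in>{0..n}. i \<in> R}. (FR R)^k $ (n - i))"
    by (rule sum.inter_filter[symmetric]) simp
  also have "{i\<in>{0..n}. i \<in> R} = R \<inter> {..n}" by auto
  finally have "real (Suc k) * T R n (Suc k) = (\<Sum>i\<in>R \<inter> {..n}. fact n / fact k * (FR R)^k $ (n - i))"
    by (simp add: sum_distrib_left)
  also have "\<dots> = (\<Sum>m\<in>R \<inter> {..n}. fact n / fact (n - m) * T R (n - m) k)"
    by (rule sum.cong) (auto simp: T_def)
  finally show ?thesis .
qed

lemma card_Dm:
  assumes "finite S"
  shows "real (card (Dm S m)) = (if m \<le> card S then fact (card S) / fact (card S - m) else 0)"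
proof (cases "m \<le> card S")
  case True
  have "card (Dm S m) = \<Prod>{card S - m + 1 .. card S}"
    unfolding Dm_def by (rule card_lists_distinct_length_eq[OF assms True])
  also have "\<dots> = fact (card S) div fact (card S - m)"
    using True by (simp add: fact_div_fact)
  finally have "real (card (Dm S m)) = real (fact (card S) div fact (card S - m))" by simp
  also have "\<dots> = fact (card S) / fact (card S - m)"
    by (subst real_of_nat_div) (auto intro: fact_dvd)
  finally show ?thesis using True by simp
next
  case False
  have "Dm S m = {}"
  proof (rule ccontr)
    assume "Dm S m \<noteq> {}"
    then obtain xs where "length xs = m" "distinct xs" "set xs \<subseteq> S" unfolding Dm_def by auto
    then have "m \<le> card S" using card_mono[OF assms] distinct_card by metis
    then show False using False by simp
  qed
  then show ?thesis using False by simp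
qed

lemma card_LP:
  assumes R: "finite R" "0 \<notin> R"
  shows "finite S \<Longrightarrow> real (card (LP S k R)) = T R (card S) k"
proof (induction k arbitrary: S)
  case 0
  then show ?case by (simp add: LP_0 T_0)
next
  case (Suc k)
  let ?n = "card S"
  have finD: "finite (Dm S m)" for m
  proof -
    have "Dm S m \<subseteq> {xs. set xs \<subseteq> S \<and> distinct xs}" unfolding Dm_def by auto
    then show ?thesis using finite_subset_distinct[OF Suc.prems] finite_subset by blast
  qed
  have disj: "\<forall>i\<in>R. \<forall>j\<in>R. i \<noteq> j \<longrightarrow> Dm S i \<inter> Dm S j = {}" unfolding Dm_def by auto
  have "real (Suc k) * real (card (LP S (Suc k) R)) = real (card (SIGMA P:LP S (Suc k) R. P))"
  proof -
    have "card (SIGMA P:LP S (Suc k) R. P) = (\<Sum>P\<in>LP S (Suc k) R. card P)"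
      using LP_finite[OF Suc.prems] by (subst card_SigmaI) (auto simp: LP_def)
    also have "\<dots> = (\<Sum>P\<in>LP S (Suc k) R. Suc k)"
      by (rule sum.cong) (auto simp: LP_def)
    finally show ?thesis by (simp add: algebra_simps)
  qed
  also have "\<dots> = real (card (SIGMA xs:(\<Union>m\<in>R. Dm S m). LP (S - set xs) k R))"
    using LP_Suc_bij[OF Suc.prems R(2)] by simp
  also have "\<dots> = (\<Sum>xs\<in>(\<Union>m\<in>R. Dm S m). real (card (LP (S - set xs) k R)))"
    using finD R LP_finite Suc.prems by (subst card_SigmaI) auto
  also have "\<dots> = (\<Sum>xs\<in>(\<Union>m\<in>R. Dm S m). T R (?n - length xs) k)"
  proof (rule sum.cong[OF refl])
    fix xs assume "xs \<in> (\<Union>m\<in>R. Dm S m)"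
    then have "distinct xs" "set xs \<subseteq> S" unfolding Dm_def by auto
    then have "card (S - set xs) = ?n - length xs"
      using Suc.prems by (simp add: card_Diff_subset distinct_card)
    then show "real (card (LP (S - set xs) k R)) = T R (?n - length xs) k"
      using Suc.IH[of "S - set xs"] Suc.prems by simp
  qed
  also have "\<dots> = (\<Sum>m\<in>R. \<Sum>xs\<in>Dm S m. T R (?n - length xs) k)"
    by (rule sum.UNION_disjoint[OF R(1)]) (use finD disj in auto)
  also have "\<dots> = (\<Sum>m\<in>R. real (card (Dm S m)) * T R (?n - m) k)"
    by (rule sum.cong[OF refl]) (simp add: Dm_def)
  also have "\<dots> = (\<Sum>m\<in>R \<inter> {..?n}. fact ?n / fact (?n - m) * T R (?n - m) k)"
    by (rule sum.mono_neutral_cong_right) (use R(1) card_Dm[OF Suc.prems] in auto)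
  also have "\<dots> = real (Suc k) * T R ?n (Suc k)" by (rule T_Suc[symmetric])
  finally show ?case by simp
qed

lemma Lah_R_eq_T:
  assumes "finite R" "0 \<notin> R"
  shows "real (Lah_R R n k) = T R n k"
proof -
  have "Lah_R R n k = card (LP {1..n} k R)"
    unfolding Lah_R_def list_partitions_def LP_def ..
  then show ?thesis using card_LP[OF assms, of "{1..n}" k] by simp
qed

definition GR :: "nat set \<Rightarrow> real fps" where "GR R = fps_inv (FR R)"

definition XI :: "nat set \<Rightarrow> nat \<Rightarrow> nat \<Rightarrow> real" where
  "XI R n k = fact n / fact k * ((GR R)^k $ n)"

lemma FR_0: "0 \<notin> R \<Longrightarrow> FR R $ 0 = 0" by (simp add: FR_def)
lemma FR_1: "1 \<in> R \<Longrightarrow> FR R $ 1 = 1" by (simp add: FR_def)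
lemma GR_0: "GR R $ 0 = 0" by (simp add: GR_def fps_inv_def)

lemma inv_identity:
  assumes R0: "0 \<notin> R" and R1: "1 \<in> R" and kn: "k \<le> n"
  shows "(\<Sum>j\<in>{k..n}. T R n j * XI R j k) = (if n = k then 1 else 0)"
proof -
  let ?F = "FR R" and ?G = "GR R"
  have F0: "?F $ 0 = 0" using FR_0[OF R0] .
  have F1: "?F $ 1 \<noteq> 0" using FR_1[OF R1] by simp
  have "(\<Sum>j\<in>{k..n}. T R n j * XI R j k) = (\<Sum>j\<in>{k..n}. fact n / fact k * ((?G^k) $ j * (?F^j) $ n))"
    by (rule sum.cong) (auto simp: T_def XI_def)
  also have "\<dots> = fact n / fact k * (\<Sum>j\<in>{k..n}. (?G^k) $ j * (?F^j) $ n)"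
    by (simp add: sum_distrib_left)
  also have "(\<Sum>j\<in>{k..n}. (?G^k) $ j * (?F^j) $ n) = (\<Sum>j\<in>{0..n}. (?G^k) $ j * (?F^j) $ n)"
  proof (rule sum.mono_neutral_left)
    show "\<forall>i\<in>{0..n} - {k..n}. (?G^k) $ i * (?F^i) $ n = 0"
      using startsby_zero_power_prefix[of ?G k] GR_0 by auto
  qed auto
  also have "\<dots> = ((?G^k) oo ?F) $ n" by (simp add: fps_compose_nth)
  also have "(?G^k) oo ?F = (?G oo ?F)^k" by (rule fps_compose_power[symmetric, OF F0])
  also have "?G oo ?F = fps_X" unfolding GR_def by (rule fps_inv[OF F0 F1])
  finally show ?thesis by simp
qed

lemma T_diag: assumes "0 \<notin> R" "1 \<in> R" shows "T R n n = 1"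
  using startsby_zero_power_nth_same[of "FR R" n] FR_0[OF assms(1)] FR_1[OF assms(2)]
  by (simp add: T_def)

lemma lt_inv_eq:
  assumes R: "finite R" "0 \<notin> R" "1 \<in> R"
  shows "k \<le> n \<Longrightarrow> lt_inv (\<lambda>i j. real (Lah_R R i j)) n k = XI R n k"
proof (induction n rule: less_induct)
  case (less n)
  let ?M = "\<lambda>i j. real (Lah_R R i j)"
  have Mnn: "?M n n = 1" using Lah_R_eq_T[OF R(1,2)] T_diag[OF R(2,3)] by simp
  have id: "(\<Sum>j\<in>{k..n}. T R n j * XI R j k) = (if n = k then 1 else 0)"
    by (rule inv_identity[OF R(2,3) less.prems])
  have split: "(\<Sum>j\<in>{k..n}. T R n j * XI R j k) = (\<Sum>j\<in>{k..<n}. T R n j * XI R j k) + XI R n k"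
    using less.prems T_diag[OF R(2,3), of n]
    by (simp add: atLeastLessThanSuc_atLeastAtMost[symmetric] sum.atLeastLessThan_Suc)
  show ?case
  proof (cases "n = k")
    case True
    then have "lt_inv ?M n k = 1 / ?M n n" by (subst lt_inv.simps) simp
    then show ?thesis using Mnn id split True by simp
  next
    case False
    then have "lt_inv ?M n k = - (\<Sum>j\<in>{k..<n}. ?M n j * lt_inv ?M j k) / ?M n n"
      using less.prems by (subst lt_inv.simps) simp
    also have "(\<Sum>j\<in>{k..<n}. ?M n j * lt_inv ?M j k) = (\<Sum>j\<in>{k..<n}. T R n j * XI R j k)"
    proof (rule sum.cong[OF refl])
      fix j assume j: "j \<in> {k..<n}"
      then have "lt_inv ?M j k = XI R j k" using less.IH[of j] by simp
      then show "?M n j * lt_inv ?M j k = T R n j * XI R j k"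
        using Lah_R_eq_T[OF R(1,2)] by simp
    qed
    finally show ?thesis using Mnn id split False by simp
  qed
qed



lemma nonneg_fixpoint:
  fixes H P :: "real fps"
  assumes H0: "H $ 0 = 0" and eq: "H = fps_X * (P oo H)" and Pnn: "\<And>i. P $ i \<ge> 0"
  shows "H $ n \<ge> 0"
proof (induction n rule: less_induct)
  case (less n)
  show ?case
  proof (cases n)
    case 0
    with H0 show ?thesis by simp
  next
    case (Suc m)
    have pw: "\<forall>j\<le>m. (H^i) $ j \<ge> 0" for i
    proof (induction i)
      case 0
      show ?case by simp
    next
      case (Suc i)
      show ?case
      proof (intro allI impI)
        fix j assume j: "j \<le> m"
        have "(H^Suc i) $ j = (\<Sum>l=0..j. H $ l * (H^i) $ (j - l))"
          by (simp add: fps_mult_nth)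
        also have "\<dots> \<ge> 0"
        proof (rule sum_nonneg)
          fix l assume l: "l \<in> {0..j}"
          then have "H $ l \<ge> 0" using less.IH[of l] j \<open>n = Suc m\<close> by simp
          moreover have "(H^i) $ (j - l) \<ge> 0" using Suc.IH j by simp
          ultimately show "H $ l * (H^i) $ (j - l) \<ge> 0" by simp
        qed
        finally show "(H^Suc i) $ j \<ge> 0" .
      qed
    qed
    have "H $ n = (fps_X * (P oo H)) $ Suc m" using eq Suc by simp
    also have "\<dots> = (P oo H) $ m" by simp
    also have "\<dots> = (\<Sum>i=0..m. P $ i * (H^i) $ m)" by (simp add: fps_compose_nth)
    also have "\<dots> \<ge> 0" using pw Pnn by (intro sum_nonneg) simp
    finally show ?thesis .
  qed
qed

lemma fps_nonneg_mult:
  fixes A B :: "real fps"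
  assumes "\<And>i. A $ i \<ge> 0" "\<And>i. B $ i \<ge> 0"
  shows "(A * B) $ n \<ge> 0"
  using assms by (simp add: fps_mult_nth sum_nonneg)

lemma fps_nonneg_power:
  fixes A :: "real fps"
  assumes "\<And>i. A $ i \<ge> 0"
  shows "(A ^ k) $ n \<ge> 0"
proof (induction k arbitrary: n)
  case 0 then show ?case by simp
next
  case (Suc k) then show ?case using fps_nonneg_mult[OF assms, of "A^k"] by simp
qed

definition AD :: "nat \<Rightarrow> real fps" where
  "AD d = Abs_fps (\<lambda>n. if d dvd n then 1 else 0)"

lemma AD_inv: assumes "d > 0" shows "AD d * (1 - fps_X ^ d) = 1"
proof -
  have "(AD d * (1 - fps_X ^ d)) $ n = (1::real fps) $ n" for n
  proof -
    have "(AD d * (1 - fps_X ^ d)) $ n = AD d $ n - (fps_X ^ d * AD d) $ n"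
      by (simp add: algebra_simps)
    also have "\<dots> = (1::real fps) $ n"
      using assms by (auto simp: fps_X_power_mult_nth AD_def dvd_minus_self
          dest: dvd_imp_le)
    finally show ?thesis .
  qed
  then show ?thesis by (simp add: fps_eq_iff)
qed

lemma geom_sum_fps: "(\<Sum>i<r. (fps_X::real fps) ^ i) * (1 - fps_X) = 1 - fps_X ^ r"
proof (induction r)
  case 0 then show ?case by simp
next
  case (Suc r)
  have "(\<Sum>i<Suc r. (fps_X::real fps) ^ i) * (1 - fps_X) = (\<Sum>i<r. fps_X ^ i) * (1 - fps_X) + fps_X ^ r * (1 - fps_X)"
    by (simp add: algebra_simps)
  also have "\<dots> = 1 - fps_X ^ r + fps_X ^ r * (1 - fps_X)" using Suc.IH by simp
  also have "\<dots> = 1 - fps_X ^ Suc r" by (simp add: algebra_simps)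
  finally show ?case .
qed

lemma Phi_exists:
  assumes "r \<ge> 1"
  shows "\<exists>P::real fps. (\<forall>i. P $ i \<ge> 0) \<and> P * ((1 - fps_X) * (1 + (-1)^r * fps_X^r)) = 1"
proof (cases "even r")
  case True
  let ?S = "(\<Sum>i<r. (fps_X::real fps) ^ i)"
  let ?P = "?S * AD (2*r)"
  have "?P * ((1 - fps_X) * (1 + (-1)^r * fps_X^r)) = (?S * (1 - fps_X)) * (1 + fps_X^r) * AD (2*r)"
    using True by (simp add: algebra_simps)
  also have "\<dots> = AD (2*r) * (1 - fps_X^(2*r))"
  proof -
    have "(fps_X::real fps) ^ (2*r) = fps_X ^ r * fps_X ^ r" by (simp add: mult_2 power_add)
    then show ?thesis unfolding geom_sum_fps by (simp add: algebra_simps)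
  qed
  also have "\<dots> = 1" using assms by (intro AD_inv) simp
  finally have e: "?P * ((1 - fps_X) * (1 + (-1)^r * fps_X^r)) = 1" .
  have "\<forall>i. ?P $ i \<ge> 0"
    by (intro allI fps_nonneg_mult) (auto simp: fps_sum_nth AD_def intro!: sum_nonneg)
  with e show ?thesis by blast
next
  case False
  let ?P = "AD 1 * AD r"
  have "?P * ((1 - fps_X) * (1 + (-1)^r * fps_X^r)) = (AD 1 * (1 - fps_X^1)) * (AD r * (1 - fps_X^r))"
    using False by (simp add: algebra_simps)
  also have "\<dots> = 1" using assms AD_inv[of 1] AD_inv[of r] by simp
  finally have e: "?P * ((1 - fps_X) * (1 + (-1)^r * fps_X^r)) = 1" .
  have "\<forall>i. ?P $ i \<ge> 0"
    by (intro allI fps_nonneg_mult) (auto simp: AD_def)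
  with e show ?thesis by blast
qed

lemma X_pow_compose: "(c::real fps) $ 0 = 0 \<Longrightarrow> fps_X ^ m oo c = c ^ m"
  by (simp add: fps_compose_power[symmetric])

lemma main_sign:
  fixes r n k :: nat
  assumes r: "r \<ge> 2" and kn: "k \<le> n"
  shows "(-1)^(n-k) * XI {1, 2, r+1, r+2} n k \<ge> 0"
proof -
  define R where "R = {1, 2, r+1, r+2}"
  let ?F = "FR R" and ?G = "GR R"
  have R0: "0 \<notin> R" and R1: "1 \<in> R" unfolding R_def by auto
  have F0: "?F $ 0 = 0" using FR_0[OF R0] .
  have F1: "?F $ 1 \<noteq> 0" using FR_1[OF R1] by simp
  have Feq: "?F = fps_X + fps_X^2 + fps_X^(r+1) + fps_X^(r+2)"
    using r by (auto simp: fps_eq_iff FR_def R_def)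
  have G0: "?G $ 0 = 0" by (rule GR_0)
  have FG: "?F oo ?G = fps_X" unfolding GR_def by (rule fps_inv_right[OF F0 F1])
  have eqG: "?G + ?G^2 + ?G^(r+1) + ?G^(r+2) = fps_X"
    using FG unfolding Feq
    by (simp only: fps_compose_add_distrib X_pow_compose[OF G0] fps_X_fps_compose_startby0[OF G0])
  define N :: "real fps" where "N = - fps_X"
  have N0: "N $ 0 = 0" by (simp add: N_def)
  define H where "H = - (?G oo N)"
  have H0: "H $ 0 = 0" using G0 by (simp add: H_def fps_compose_nth)
  have GN: "?G oo N = - H" by (simp add: H_def)
  have pwN: "?G ^ m oo N = (- H) ^ m" for m
    using fps_compose_power[OF N0, of ?G m] GN by simp
  have eq2: "(- H) + (- H)^2 + (- H)^(r+1) + (- H)^(r+2) = - fps_X"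
  proof -
    have "(?G + ?G^2 + ?G^(r+1) + ?G^(r+2)) oo N = fps_X oo N" using eqG by simp
    then show ?thesis
      by (simp only: fps_compose_add_distrib pwN fps_X_fps_compose_startby0[OF N0] GN power_one_right)
        (simp add: N_def)
  qed
  define s :: "real fps" where "s = (-1)^r"
  have eq3: "H * ((1 - H) * (1 + s * H^r)) = fps_X"
  proof -
    have pr: "(- H)^r = s * H^r" unfolding s_def by (rule power_minus)
    have p0: "(- H)^2 = H * H" by (simp add: power2_eq_square)
    have p1: "(- H)^(r+1) = - (H * (s * H^r))" using pr by simp
    have p2: "(- H)^(r+2) = H * (H * (s * H^r))" using pr by simp
    have "H * ((1 - H) * (1 + s * H^r)) = - ((- H) + (- H)^2 + (- H)^(r+1) + (- H)^(r+2))"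
      unfolding p0 p1 p2 by (simp add: algebra_simps)
    also have "\<dots> = - (- fps_X)" by (simp only: eq2)
    finally show ?thesis by simp
  qed
  let ?Pq = "(1 - fps_X) * (1 + (-1)^r * fps_X^r) :: real fps"
  have sH: "((-1)^r :: real fps) oo H = s"
  proof -
    have "((-1)^r :: real fps) oo H = ((-1) oo H)^r" by (rule fps_compose_power[OF H0, symmetric])
    also have "(-1::real fps) oo H = -1" by (simp add: fps_compose_uminus)
    finally show ?thesis by (simp add: s_def)
  qed
  have PqH: "?Pq oo H = (1 - H) * (1 + s * H^r)"
    by (simp only: fps_compose_mult_distrib[OF H0] fps_compose_sub_distrib fps_compose_add_distrib
        fps_compose_1 fps_X_fps_compose_startby0[OF H0] X_pow_compose[OF H0] sH)
  obtain P where Pnn: "\<forall>i. P $ i \<ge> 0" and PPq: "P * ?Pq = 1"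
    using Phi_exists[of r] r by auto
  have Heq: "H = fps_X * (P oo H)"
  proof -
    have "H = H * ((P * ?Pq) oo H)" using PPq by simp
    also have "\<dots> = (P oo H) * (H * (?Pq oo H))"
      by (simp only: fps_compose_mult_distrib[OF H0] mult_ac)
    also have "\<dots> = (P oo H) * fps_X" using PqH eq3 by simp
    finally show ?thesis by (simp add: mult.commute)
  qed
  have Hnn: "\<And>i. H $ i \<ge> 0"
    using nonneg_fixpoint[OF H0 Heq] Pnn by blast
  have rel: "(-1)^n * (?G^k) $ n = (-1)^k * (H^k) $ n"
  proof -
    have "(?G^k oo N) $ n = (-1)^n * (?G^k) $ n"
      unfolding N_def fps_compose_uminus' by simp
    moreover have "?G^k oo N = fps_const ((-1)^k) * H^k"
    proof -
      have c: "fps_const ((-1::real)^k) = (-1)^k"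
        by (simp only: fps_const_power[symmetric] fps_const_neg[symmetric] fps_const_1_eq_1)
      show ?thesis unfolding pwN c by (rule power_minus)
    qed
    ultimately show ?thesis by simp
  qed
  have sgn: "(-1::real)^(n-k) * (?G^k) $ n = (H^k) $ n"
  proof -
    have e1: "(-1::real)^(n-k) = (-1)^k * (-1)^n"
    proof -
      have "(-1::real)^n = (-1)^(n-k) * (-1)^k" using kn by (simp add: power_add[symmetric])
      then have "(-1::real)^k * (-1)^n = (-1)^(n-k) * ((-1)^k * (-1)^k)" by (simp add: algebra_simps)
      also have "(-1::real)^k * (-1)^k = 1" by (simp add: power_add[symmetric] flip: mult_2)
      finally show ?thesis by simp
    qed
    have "(-1::real)^(n-k) * (?G^k) $ n = (-1)^k * ((-1)^n * (?G^k) $ n)" using e1 by simp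
    also have "\<dots> = ((-1)^k * (-1)^k) * (H^k) $ n" using rel by simp
    also have "(-1::real)^k * (-1)^k = 1" by (simp add: power_add[symmetric] flip: mult_2)
    finally show ?thesis by simp
  qed
  have "(-1)^(n-k) * XI R n k = fact n / fact k * (H^k) $ n"
    unfolding XI_def using sgn by (simp add: algebra_simps)
  also have "\<dots> \<ge> 0" using fps_nonneg_power[OF Hnn] by simp
  finally show ?thesis unfolding R_def .
qed


theorem mainTheorem9:
  fixes r n k :: nat
  assumes "r \<ge> 2" and "n \<ge> 1" and "k \<ge> 1"
  shows "(-1) ^ (n - k) * Lah_R_inv {1, 2, r + 1, r + 2} n k \<ge> 0"
proof (cases "k \<le> n")
  case True
  have R: "finite {1, 2, r + 1, r + 2}" "0 \<notin> {1, 2, r + 1, r + 2}" "(1::nat) \<in> {1, 2, r + 1, r + 2}"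
    by auto
  have "Lah_R_inv {1, 2, r + 1, r + 2} n k = XI {1, 2, r + 1, r + 2} n k"
    unfolding Lah_R_inv_def by (rule lt_inv_eq[OF R True])
  then show ?thesis using main_sign[OF assms(1) True] by simp
next
  case False
  then have "Lah_R_inv {1, 2, r + 1, r + 2} n k = 0"
    unfolding Lah_R_inv_def by (subst lt_inv.simps) simp
  then show ?thesis by simp
qed

end
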